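(* Let $\mathcal Z\subseteq[0,1]^d$ and suppose $y_1(\mathbf{x})=y_2(\mathbf{x})$ for all $\mathbf{x}\notin\mathcal Z$. Then for any admissible algorithm with budget $n$, $\mathbb{P}_2(\tau(\mathcal Z)>t)=\mathbb{P}_1(\tau(\mathcal Z)>t)$ for all $t$, where $\mathbb{P}_i$ denotes probability when the algorithm is run on Problem $i$.
   Context: Problem $i$ ($i=1,2$): objective $y_i:[0,1]^d\to\mathbb{R}$; a query at $\mathbf{x}$ returns $Y(\mathbf{x})=y_i(\mathbf{x})+\varepsilon(\mathbf{x})$ with $\varepsilon(\mathbf{x})\sim N(0,\sigma^2)$, $\sigma^2\ge0$, independent of everything else. Admissible algorithm with budget $n$: (i) $\mathbf{x}_1$ deterministic or a measurable function of a random vector $U_1$; (ii) for $t=1,\dots,n-1$, $\mathbf{x}_{t+1}$ a measurable function of $\mathbf{x}_1,Y(\mathbf{x}_1),\dots,\mathbf{x}_t,Y(\mathbf{x}_t)$ and a random vector $U_{t+1}$; (iii) output $\hat{\mathbf{x}}_n^*$ a measurable function of the full history and a random vector $U_n^*$; (iv) $\hat{\mathbf{x}}_n^*\in\{\mathbf{x}_1,\dots,\mathbf{x}_n\}$; the $U$'s are independent random vectors independent of the noise. First hitting time: $\tau(\mathcal Z)=\min\{t\in\{1,\dots,n\}:\mathbf{x}_t\in\mathcal Z\}$ if some $\mathbf{x}_t\in\mathcal Z$, and $\tau(\mathcal Z)=n+1$ otherwise. *)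

theory Defs
  imports "HOL-Probability.Probability"
begin

text \<open>The domain [0,1]^d, with points represented as real^'d (d = CARD('d)).\<close>
definition unit_cube :: "(real ^ 'd) set" where
  "unit_cube = {x. \<forall>i. 0 \<le> x $ i \<and> x $ i \<le> 1}"

definition noise_law :: "real \<Rightarrow> real measure" where
  "noise_law \<sigma> = (if \<sigma> = 0 then return borel 0 else density lborel (normal_density 0 \<sigma>))"

text \<open>Histories: the history after t queries is the function mapping s in {1..t} to the
  pair (x_s, Y(x_s)) (undefined elsewhere), an element of the product space below.\<close>
type_synonym 'd history = "nat \<Rightarrow> (real ^ 'd) \<times> real"

definition hist_space :: "nat set \<Rightarrow> ('d::finite) history measure" where
  "hist_space I = (\<Pi>\<^sub>M s\<in>I. (borel :: (real ^ 'd) measure) \<Otimes>\<^sub>M (borel :: real measure))"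

text \<open>Admissible algorithm with budget n: query rules A t (t = 1..n), where x_t = A t h_{t-1} U_t
  is a jointly measurable function of the history of the first t-1 queries and of the random
  vector U_t (for t = 1 the history is empty, so x_1 is a measurable function of U_1, possibly
  constant); and an output rule O, jointly measurable in the full history and U_n^*, whose value
  is always one of the queried points.\<close>
definition admissible ::
  "nat \<Rightarrow> (nat \<Rightarrow> ('d::finite) history \<Rightarrow> 'u::euclidean_space \<Rightarrow> real ^ 'd)
       \<Rightarrow> ('d history \<Rightarrow> 'u \<Rightarrow> real ^ 'd) \<Rightarrow> bool" where
  "admissible n A Out \<longleftrightarrow>
     (\<forall>t\<in>{1..n}.
        (\<lambda>(h, u). A t h u) \<in> (hist_space {1..<t} \<Otimes>\<^sub>M (borel :: 'u measure)) \<rightarrow>\<^sub>M borel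
      \<and> (\<forall>h\<in>space (hist_space {1..<t}). \<forall>u. A t h u \<in> unit_cube))
   \<and> (\<lambda>(h, u). Out h u) \<in> (hist_space {1..n} \<Otimes>\<^sub>M (borel :: 'u measure)) \<rightarrow>\<^sub>M borel
   \<and> (\<forall>h\<in>space (hist_space {1..n}). \<forall>u. Out h u \<in> {fst (h s) |s. s \<in> {1..n}})"

text \<open>Randomness on the probability space M: random vectors U_1..U_n and U_n^* (indexed n+1
  below), and noise variables E_1..E_n (E_t is the noise of the t-th query), with E_t ~ N(0,sigma^2),
  all 2n+1 variables jointly (mutually) independent.\<close>
definition all_U :: "nat \<Rightarrow> (nat \<Rightarrow> 'w \<Rightarrow> 'u) \<Rightarrow> ('w \<Rightarrow> 'u) \<Rightarrow> nat \<Rightarrow> 'w \<Rightarrow> 'u" where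
  "all_U n U Ustar t = (if t = n + 1 then Ustar else U t)"

definition admissible_randomness ::
  "'w measure \<Rightarrow> nat \<Rightarrow> real \<Rightarrow> (nat \<Rightarrow> 'w \<Rightarrow> 'u::euclidean_space) \<Rightarrow> ('w \<Rightarrow> 'u)
     \<Rightarrow> (nat \<Rightarrow> 'w \<Rightarrow> real) \<Rightarrow> bool" where
  "admissible_randomness M n \<sigma> U Ustar E \<longleftrightarrow>
     prob_space M \<and> 0 \<le> \<sigma>
   \<and> (\<forall>t\<in>{1..n+1}. all_U n U Ustar t \<in> borel_measurable M)
   \<and> (\<forall>t\<in>{1..n}. E t \<in> borel_measurable M)
   \<and> (\<forall>t\<in>{1..n}. distr M borel (E t) = noise_law \<sigma>)
   \<and> prob_space.indep_sets M
       (\<lambda>i. case i of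
              Inl t \<Rightarrow> {all_U n U Ustar t -` A \<inter> space M |A. A \<in> sets (borel :: 'u measure)}
            | Inr t \<Rightarrow> {E t -` B \<inter> space M |B. B \<in> sets (borel :: real measure)})
       (Inl ` {1..n+1} \<union> Inr ` {1..n})"

fun hist :: "(nat \<Rightarrow> ('d::finite) history \<Rightarrow> 'u \<Rightarrow> real ^ 'd) \<Rightarrow> (real ^ 'd \<Rightarrow> real)
    \<Rightarrow> (nat \<Rightarrow> 'w \<Rightarrow> 'u) \<Rightarrow> (nat \<Rightarrow> 'w \<Rightarrow> real) \<Rightarrow> nat \<Rightarrow> 'w \<Rightarrow> 'd history" where
  "hist A y U E 0 \<omega> = (\<lambda>_. undefined)"
| "hist A y U E (Suc t) \<omega> =
     (let h = hist A y U E t \<omega>; x = A (Suc t) h (U (Suc t) \<omega>)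
      in h(Suc t := (x, y x + E (Suc t) \<omega>)))"

definition query :: "(nat \<Rightarrow> ('d::finite) history \<Rightarrow> 'u \<Rightarrow> real ^ 'd) \<Rightarrow> (real ^ 'd \<Rightarrow> real)
    \<Rightarrow> (nat \<Rightarrow> 'w \<Rightarrow> 'u) \<Rightarrow> (nat \<Rightarrow> 'w \<Rightarrow> real) \<Rightarrow> nat \<Rightarrow> 'w \<Rightarrow> real ^ 'd" where
  "query A y U E t \<omega> = A t (hist A y U E (t - 1) \<omega>) (U t \<omega>)"

definition first_hit :: "nat \<Rightarrow> 'a set \<Rightarrow> (nat \<Rightarrow> 'a) \<Rightarrow> nat" where
  "first_hit n Z x = (if \<exists>t\<in>{1..n}. x t \<in> Z then (LEAST t. t \<in> {1..n} \<and> x t \<in> Z) else n + 1)"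

end

theory Submission
  imports Defs
begin

lemma hist_space_mem:
  "hist A y U E t \<omega> \<in> space (hist_space {1..<Suc t})"
proof (induction t)
  case 0
  then show ?case by (simp add: hist_space_def space_PiM)
next
  case (Suc t)
  have e: "{1..<Suc (Suc t)} = insert (Suc t) {1..<Suc t}" by auto
  have h: "hist A y U E t \<omega> \<in> {1..<Suc t} \<rightarrow>\<^sub>E UNIV"
    using Suc by (simp add: hist_space_def space_PiM space_pair_measure)
  have "hist A y U E (Suc t) \<omega> \<in> insert (Suc t) {1..<Suc t} \<rightarrow>\<^sub>E UNIV"
    unfolding hist.simps Let_def by (rule PiE_fun_upd[OF _ h]) simp
  then show ?case unfolding e[symmetric] by (simp add: hist_space_def space_PiM space_pair_measure)
qed

lemma hist_eq:
  assumes "\<forall>x\<in>unit_cube - Z. y1 x = y2 x"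
    and adm: "admissible n A Out"
  shows "t \<le> n \<Longrightarrow> (\<forall>s\<in>{1..t}. query A y1 U E s \<omega> \<notin> Z) \<Longrightarrow>
         hist A y1 U E t \<omega> = hist A y2 U E t \<omega>"
proof (induction t)
  case 0
  then show ?case by simp
next
  case (Suc t)
  then have IH: "hist A y1 U E t \<omega> = hist A y2 U E t \<omega>" by auto
  define x where "x = A (Suc t) (hist A y1 U E t \<omega>) (U (Suc t) \<omega>)"
  have "x \<notin> Z" using Suc.prems(2)[rule_format, of "Suc t"] unfolding x_def query_def by simp
  moreover have "x \<in> unit_cube"
    using adm Suc.prems(1) hist_space_mem[of A y1 U E t \<omega>] unfolding admissible_def x_def
    by auto
  ultimately have "y1 x = y2 x" using assms(1) by auto
  then show ?case using IH by (simp add: Let_def x_def)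
qed

lemma first_hit_eq:
  assumes "\<forall>s\<in>{1..n}. (\<forall>r\<in>{1..<s}. x r \<notin> Z) \<longrightarrow> x s = x' s"
  shows "first_hit n Z x = first_hit n Z x'"
proof -
  have P: "s \<le> n \<Longrightarrow> (\<forall>r\<in>{1..s}. x r \<notin> Z) \<longleftrightarrow> (\<forall>r\<in>{1..s}. x' r \<notin> Z)" for s
  proof (induction s)
    case 0 then show ?case by simp
  next
    case (Suc s)
    have e: "\<And>P. (\<forall>r\<in>{1..Suc s}. P r) \<longleftrightarrow> (\<forall>r\<in>{1..s}. P r) \<and> P (Suc s)"
      using atLeastAtMostSuc_conv[of 1 s] by auto
    have e2: "{1..<Suc s} = {1..s}" by auto
    show ?case
    proof (cases "\<forall>r\<in>{1..s}. x r \<notin> Z")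
      case True
      then have "x (Suc s) = x' (Suc s)" using assms Suc.prems e2 by auto
      then show ?thesis using Suc True unfolding e[of "\<lambda>r. x r \<notin> Z"] e[of "\<lambda>r. x' r \<notin> Z"] by simp
    next
      case False
      then show ?thesis using Suc unfolding e[of "\<lambda>r. x r \<notin> Z"] e[of "\<lambda>r. x' r \<notin> Z"] by auto
    qed
  qed
  have Q: "s \<in> {1..n} \<Longrightarrow> (x s \<in> Z \<and> (\<forall>r\<in>{1..<s}. x r \<notin> Z)) \<longleftrightarrow> (x' s \<in> Z \<and> (\<forall>r\<in>{1..<s}. x' r \<notin> Z))" for s
  proof -
    assume s: "s \<in> {1..n}"
    have e2: "{1..<s} = {1..s-1}" using s by auto
    have "(\<forall>r\<in>{1..<s}. x r \<notin> Z) \<longleftrightarrow> (\<forall>r\<in>{1..<s}. x' r \<notin> Z)" using P[of "s-1"] s e2 by auto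
    moreover have "(\<forall>r\<in>{1..<s}. x r \<notin> Z) \<Longrightarrow> x s = x' s" using assms s by auto
    ultimately show ?thesis by auto
  qed
  have ex: "(\<exists>t\<in>{1..n}. x t \<in> Z) \<longleftrightarrow> (\<exists>t\<in>{1..n}. x' t \<in> Z)" using P[of n] by auto
  show ?thesis
  proof (cases "\<exists>t\<in>{1..n}. x t \<in> Z")
    case False then show ?thesis using ex by (simp add: first_hit_def)
  next
    case True
    define m where "m = (LEAST t. t \<in> {1..n} \<and> x t \<in> Z)"
    have m1: "m \<in> {1..n} \<and> x m \<in> Z" using True unfolding m_def by (metis (mono_tags, lifting) LeastI)
    have m2: "\<forall>r\<in>{1..<m}. x r \<notin> Z" unfolding m_def
      by (metis (mono_tags, lifting) atLeastAtMost_iff atLeastLessThan_iff m1 m_def not_less_Least order.strict_implies_order order_trans)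
    have mx': "x' m \<in> Z \<and> (\<forall>r\<in>{1..<m}. x' r \<notin> Z)" using Q[of m] m1 m2 by auto
    have "(LEAST t. t \<in> {1..n} \<and> x' t \<in> Z) = m"
    proof (rule Least_equality)
      show "m \<in> {1..n} \<and> x' m \<in> Z" using m1 mx' by auto
      fix r assume "r \<in> {1..n} \<and> x' r \<in> Z"
      then show "m \<le> r" using mx' by (meson atLeastAtMost_iff atLeastLessThan_iff not_le)
    qed
    then show ?thesis using True ex by (simp add: first_hit_def m_def)
  qed
qed

theorem lemma2:
  fixes n :: nat and \<sigma> :: real
    and Z :: "(real ^ 'd::finite) set"
    and y1 y2 :: "real ^ 'd \<Rightarrow> real"
    and A :: "nat \<Rightarrow> 'd history \<Rightarrow> 'u::euclidean_space \<Rightarrow> real ^ 'd"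
    and Out :: "'d history \<Rightarrow> 'u \<Rightarrow> real ^ 'd"
    and M :: "'w measure" and U :: "nat \<Rightarrow> 'w \<Rightarrow> 'u" and Ustar :: "'w \<Rightarrow> 'u"
    and E :: "nat \<Rightarrow> 'w \<Rightarrow> real"
  assumes "Z \<subseteq> unit_cube"
    and "\<forall>x\<in>unit_cube - Z. y1 x = y2 x"
    and "admissible n A Out"
    and "admissible_randomness M n \<sigma> U Ustar E"
  shows "\<forall>t::real.
           measure M {\<omega> \<in> space M. real (first_hit n Z (\<lambda>s. query A y2 U E s \<omega>)) > t}
         = measure M {\<omega> \<in> space M. real (first_hit n Z (\<lambda>s. query A y1 U E s \<omega>)) > t}"
proof -
  have "first_hit n Z (\<lambda>s. query A y1 U E s \<omega>) = first_hit n Z (\<lambda>s. query A y2 U E s \<omega>)" for \<omega>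
  proof (rule first_hit_eq, intro ballI impI)
    fix s assume s: "s \<in> {1..n}" and h: "\<forall>r\<in>{1..<s}. query A y1 U E r \<omega> \<notin> Z"
    have e: "{1..s-1} = {1..<s}" using s by auto
    have "hist A y1 U E (s-1) \<omega> = hist A y2 U E (s-1) \<omega>"
      using hist_eq[OF assms(2,3), of "s-1" U E \<omega>] s h e by auto
    then show "query A y1 U E s \<omega> = query A y2 U E s \<omega>" by (simp add: query_def)
  qed
  then show ?thesis by simp
qed

end
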